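(* Let $F$ be a distribution on $[0,\infty]$, $\boldsymbol\sigma=\{\sigma_1<\dots<\sigma_T\}\subset(0,\infty)$, and let $\mathbf p_1=(p_{11},\dots,p_{1T})$, $\mathbf p_2=(p_{21},\dots,p_{2T})\in[0,1]^T$ with $p_{1t}\le p_{2t}$ for all $t$. Then $r(F,\boldsymbol\sigma,\mathbf p_1)\le r(F,\boldsymbol\sigma,\mathbf p_2)$.
   Context: The $(F,\boldsymbol\sigma,\mathbf p)$ random process: given a distribution $F$ on $[0,\infty]$, points $0<\sigma_1<\dots<\sigma_T$ (called arrivals) and probabilities $\mathbf p=(p_1,\dots,p_T)\in[0,1]^T$. A single unit of a resource is at each time either available or in use; it is available at time $0$. At each $\sigma_t$ at which the unit is available, with probability $p_t$ (independently of everything else) the unit becomes in use for an independent duration $d\sim F$, i.e. it is in use on $(\sigma_t,\sigma_t+d)$ and available again from time $\sigma_t+d$; each such switch from available to in use earns reward $1$. $r(F,\boldsymbol\sigma,\mathbf p)$ denotes the expected total reward. *)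

theory Defs
  imports "HOL-Probability.Probability"
begin

text \<open>Arrivals are indexed 1..T: sigma 1 < ... < sigma T. A distribution F on [0,\<infinity>]
is a probability measure on ennreal (Borel sets).

next_avail sigma T t d: the first arrival index u with t < u \<le> T at which the unit
is available again, given it was taken at sigma t for duration d, i.e. the least u
with sigma u \<ge> sigma t + d; T+1 if there is none.\<close>

definition next_avail :: "(nat \<Rightarrow> real) \<Rightarrow> nat \<Rightarrow> nat \<Rightarrow> ennreal \<Rightarrow> nat" where
  "next_avail \<sigma> T t d =
     (if \<exists>u. t < u \<and> u \<le> T \<and> d \<le> ennreal (\<sigma> u - \<sigma> t)
      then (LEAST u. t < u \<and> u \<le> T \<and> d \<le> ennreal (\<sigma> u - \<sigma> t))
      else Suc T)"

text \<open>val F sigma p T n t: expected total reward collected from arrivals t, t+1, ..., T,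
given that the unit is available at time sigma t (n is fuel, with n \<ge> T + 1 - t enough).\<close>

primrec val :: "ennreal measure \<Rightarrow> (nat \<Rightarrow> real) \<Rightarrow> (nat \<Rightarrow> real) \<Rightarrow> nat \<Rightarrow> nat \<Rightarrow> nat \<Rightarrow> ennreal" where
  "val F \<sigma> p T 0 t = 0"
| "val F \<sigma> p T (Suc n) t =
     (if T < t then 0
      else ennreal (p t) * (1 + (\<integral>\<^sup>+ d. val F \<sigma> p T n (next_avail \<sigma> T t d) \<partial>F))
           + ennreal (1 - p t) * val F \<sigma> p T n (Suc t))"

definition reward :: "ennreal measure \<Rightarrow> (nat \<Rightarrow> real) \<Rightarrow> (nat \<Rightarrow> real) \<Rightarrow> nat \<Rightarrow> ennreal" where
  "reward F \<sigma> p T = val F \<sigma> p T T 1"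

end

theory Submission
  imports Defs
begin

lemma na_gt: "t \<le> T \<Longrightarrow> t < next_avail \<sigma> T t d"
proof -
  assume "t \<le> T"
  show ?thesis
  proof (cases "\<exists>u. t < u \<and> u \<le> T \<and> d \<le> ennreal (\<sigma> u - \<sigma> t)")
    case True
    then have "t < (LEAST u. t < u \<and> u \<le> T \<and> d \<le> ennreal (\<sigma> u - \<sigma> t))"
      by (metis (mono_tags, lifting) LeastI)
    then show ?thesis using True by (simp add: next_avail_def)
  next
    case False
    show ?thesis using \<open>t \<le> T\<close> by (subst next_avail_def, subst if_not_P[OF False]) simp
  qed
qed

lemma na_le: "next_avail \<sigma> T t d \<le> Suc T"
proof (cases "\<exists>u. t < u \<and> u \<le> T \<and> d \<le> ennreal (\<sigma> u - \<sigma> t)")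
  case True
  then have "(LEAST u. t < u \<and> u \<le> T \<and> d \<le> ennreal (\<sigma> u - \<sigma> t)) \<le> T"
    by (metis (mono_tags, lifting) LeastI)
  then show ?thesis using True by (simp add: next_avail_def)
next
  case False
  show ?thesis by (subst next_avail_def, subst if_not_P[OF False]) simp
qed

lemma sig_mono:
  fixes \<sigma> :: "nat \<Rightarrow> real"
  assumes "\<And>i. 1 \<le> i \<Longrightarrow> i < T \<Longrightarrow> \<sigma> i < \<sigma> (Suc i)"
  shows "1 \<le> i \<Longrightarrow> i \<le> j \<Longrightarrow> j \<le> T \<Longrightarrow> \<sigma> i \<le> \<sigma> j"
proof (induction j)
  case 0
  then show ?case by simp
next
  case (Suc j)
  show ?case
  proof (cases "i = Suc j")
    case False
    then have "i \<le> j" using Suc by simp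
    then have "\<sigma> i \<le> \<sigma> j" using Suc by simp
    also have "\<sigma> j < \<sigma> (Suc j)" using assms[of j] Suc \<open>i \<le> j\<close> by simp
    finally show ?thesis by simp
  qed simp
qed

lemma na_mono:
  fixes \<sigma> :: "nat \<Rightarrow> real"
  assumes "\<And>i. 1 \<le> i \<Longrightarrow> i < T \<Longrightarrow> \<sigma> i < \<sigma> (Suc i)"
    and "1 \<le> x" "x < a" "a \<le> T"
  shows "next_avail \<sigma> T x d \<le> next_avail \<sigma> T a d"
proof (cases "\<exists>u. a < u \<and> u \<le> T \<and> d \<le> ennreal (\<sigma> u - \<sigma> a)")
  case True
  define u where "u = (LEAST u. a < u \<and> u \<le> T \<and> d \<le> ennreal (\<sigma> u - \<sigma> a))"
  have u: "a < u \<and> u \<le> T \<and> d \<le> ennreal (\<sigma> u - \<sigma> a)"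
    unfolding u_def using True by (metis (mono_tags, lifting) LeastI)
  have "\<sigma> x \<le> \<sigma> a" using assms by (intro sig_mono[where T=T]) auto
  then have "ennreal (\<sigma> u - \<sigma> a) \<le> ennreal (\<sigma> u - \<sigma> x)" by (intro ennreal_leI) simp
  then have ux: "x < u \<and> u \<le> T \<and> d \<le> ennreal (\<sigma> u - \<sigma> x)" using u assms by auto
  then have "(LEAST u. x < u \<and> u \<le> T \<and> d \<le> ennreal (\<sigma> u - \<sigma> x)) \<le> u"
    by (rule Least_le)
  then show ?thesis using True ux unfolding next_avail_def u_def by auto
next
  case False
  have "next_avail \<sigma> T a d = Suc T" by (subst next_avail_def, subst if_not_P[OF False]) simp
  then show ?thesis using na_le[of \<sigma> T x d] by simp
qed

lemma fuel1: "Suc T \<le> n + t \<Longrightarrow> val F \<sigma> p T n t = val F \<sigma> p T (Suc n) t"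
proof (induction n arbitrary: t)
  case 0
  then show ?case by simp
next
  case (Suc k)
  show ?case
  proof (cases "T < t")
    case False
    have a: "val F \<sigma> p T k (next_avail \<sigma> T t d) = val F \<sigma> p T (Suc k) (next_avail \<sigma> T t d)" for d
      using Suc.IH[of "next_avail \<sigma> T t d"] Suc.prems na_gt[of t T \<sigma> d] False by simp
    have b: "val F \<sigma> p T k (Suc t) = val F \<sigma> p T (Suc k) (Suc t)"
      using Suc.IH[of "Suc t"] Suc.prems by simp
    have "val F \<sigma> p T (Suc k) t = ennreal (p t) * (1 + (\<integral>\<^sup>+ d. val F \<sigma> p T k (next_avail \<sigma> T t d) \<partial>F))
           + ennreal (1 - p t) * val F \<sigma> p T k (Suc t)" using False by simp
    also have "\<dots> = ennreal (p t) * (1 + (\<integral>\<^sup>+ d. val F \<sigma> p T (Suc k) (next_avail \<sigma> T t d) \<partial>F))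
           + ennreal (1 - p t) * val F \<sigma> p T (Suc k) (Suc t)" by (simp only: a b)
    also have "\<dots> = val F \<sigma> p T (Suc (Suc k)) t" using False by (simp only: val.simps(2) if_False)
    finally show ?thesis .
  qed simp
qed

lemma fuel: "Suc T \<le> n + t \<Longrightarrow> val F \<sigma> p T n t = val F \<sigma> p T (n + k) t"
  by (induction k) (auto intro: fuel1 simp del: val.simps)

definition W where "W F \<sigma> p T t = val F \<sigma> p T (Suc T) t"

lemma W_rec: "t \<le> T \<Longrightarrow> W F \<sigma> p T t = ennreal (p t) * (1 + (\<integral>\<^sup>+ d. W F \<sigma> p T (next_avail \<sigma> T t d) \<partial>F))
           + ennreal (1 - p t) * W F \<sigma> p T (Suc t)"
proof -
  assume t: "t \<le> T"
  have a: "val F \<sigma> p T T s = W F \<sigma> p T s" if "1 \<le> s" for s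
    using fuel[of T T s F \<sigma> p 1] that unfolding W_def by simp
  have b: "val F \<sigma> p T T (next_avail \<sigma> T t d) = W F \<sigma> p T (next_avail \<sigma> T t d)" for d
    using a na_gt[OF t, of \<sigma> d] by simp
  show ?thesis using t unfolding W_def[of F \<sigma> p T t] by (simp add: b a)
qed

lemma W_zero: "T < t \<Longrightarrow> W F \<sigma> p T t = 0"
  unfolding W_def by simp

lemma reward_W: "reward F \<sigma> p T = W F \<sigma> p T 1"
  unfolding reward_def W_def using fuel[of T T 1 F \<sigma> p 1] by simp

lemma conv_le:
  fixes A B C :: ennreal and p :: real
  assumes "0 \<le> p" "p \<le> 1" "A \<le> C" "B \<le> C"
  shows "ennreal p * A + ennreal (1 - p) * B \<le> C"
proof -
  have "ennreal p * A + ennreal (1 - p) * B \<le> ennreal p * C + ennreal (1 - p) * C"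
    using assms by (intro add_mono mult_left_mono) auto
  also have "\<dots> = (ennreal p + ennreal (1 - p)) * C" by (simp add: distrib_right)
  also have "\<dots> = C" using assms by (subst ennreal_plus[symmetric]) auto
  finally show ?thesis .
qed

lemma conv_ge:
  fixes A B C :: ennreal and p :: real
  assumes "0 \<le> p" "p \<le> 1" "C \<le> A" "C \<le> B"
  shows "C \<le> ennreal p * A + ennreal (1 - p) * B"
proof -
  have "C = (ennreal p + ennreal (1 - p)) * C" using assms by (subst ennreal_plus[symmetric]) auto
  also have "\<dots> = ennreal p * C + ennreal (1 - p) * C" by (simp add: distrib_right)
  also have "\<dots> \<le> ennreal p * A + ennreal (1 - p) * B"
    using assms by (intro add_mono mult_left_mono) auto
  finally show ?thesis .
qed

lemma conv_mono:
  fixes A B :: ennreal and p1 p2 :: real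
  assumes "0 \<le> p1" "p1 \<le> p2" "p2 \<le> 1" "B \<le> A"
  shows "ennreal p1 * A + ennreal (1 - p1) * B \<le> ennreal p2 * A + ennreal (1 - p2) * B"
proof -
  have e1: "ennreal p2 = ennreal p1 + ennreal (p2 - p1)" using assms by (subst ennreal_plus[symmetric]) auto
  have e2: "ennreal (1 - p1) = ennreal (p2 - p1) + ennreal (1 - p2)" using assms by (subst ennreal_plus[symmetric]) auto
  have "ennreal p1 * A + ennreal (1 - p1) * B = ennreal p1 * A + ennreal (p2 - p1) * B + ennreal (1 - p2) * B"
    by (simp add: e2 distrib_right add.assoc)
  also have "\<dots> \<le> ennreal p1 * A + ennreal (p2 - p1) * A + ennreal (1 - p2) * B"
    using assms by (intro add_mono mult_left_mono) auto
  also have "\<dots> = ennreal p2 * A + ennreal (1 - p2) * B"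
    by (simp add: e1 distrib_right)
  finally show ?thesis .
qed

lemma K_inner:
  fixes \<sigma> p :: "nat \<Rightarrow> real"
  assumes Hs: "\<And>i. 1 \<le> i \<Longrightarrow> i < T \<Longrightarrow> \<sigma> i < \<sigma> (Suc i)"
    and Hp: "\<And>t. 1 \<le> t \<Longrightarrow> t \<le> T \<Longrightarrow> 0 \<le> p t \<and> p t \<le> 1"
    and x: "1 \<le> x" "x \<le> T"
    and M: "\<And>z y. x < z \<Longrightarrow> z \<le> y \<Longrightarrow> W F \<sigma> p T y \<le> W F \<sigma> p T z"
    and a: "x < a"
  shows "W F \<sigma> p T a \<le> 1 + (\<integral>\<^sup>+ d. W F \<sigma> p T (next_avail \<sigma> T x d) \<partial>F)"
proof (cases "T < a")
  case True
  then show ?thesis by (simp add: W_zero)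
next
  case False
  then have "a \<le> Suc T" by simp
  then show ?thesis
  proof (induction a rule: inc_induct)
    case base
    then show ?case by (simp add: W_zero)
  next
    case (step n)
    have n: "n \<le> T" "x < n" using step a by auto
    have "(\<integral>\<^sup>+ d. W F \<sigma> p T (next_avail \<sigma> T n d) \<partial>F) \<le> (\<integral>\<^sup>+ d. W F \<sigma> p T (next_avail \<sigma> T x d) \<partial>F)"
    proof (rule nn_integral_mono)
      fix d
      show "W F \<sigma> p T (next_avail \<sigma> T n d) \<le> W F \<sigma> p T (next_avail \<sigma> T x d)"
        using M na_gt[OF x(2), of \<sigma> d] na_mono[where \<sigma>=\<sigma> and T=T, OF Hs x(1) n(2) n(1), of d] by blast
    qed
    then show ?case
      unfolding W_rec[OF n(1)] using step.IH Hp[of n] n x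
      by (intro conv_le) (auto intro: add_left_mono)
  qed
qed

lemma W_mono:
  fixes \<sigma> p :: "nat \<Rightarrow> real"
  assumes Hs: "\<And>i. 1 \<le> i \<Longrightarrow> i < T \<Longrightarrow> \<sigma> i < \<sigma> (Suc i)"
    and Hp: "\<And>t. 1 \<le> t \<Longrightarrow> t \<le> T \<Longrightarrow> 0 \<le> p t \<and> p t \<le> 1"
    and x: "1 \<le> x"
  shows "\<forall>z y. x \<le> z \<longrightarrow> z \<le> y \<longrightarrow> W F \<sigma> p T y \<le> W F \<sigma> p T z"
proof (cases "T < x")
  case True
  then show ?thesis by (simp add: W_zero)
next
  case False
  then have "x \<le> Suc T" by simp
  then show ?thesis
  proof (induction x rule: inc_induct)
    case base
    then show ?case by (simp add: W_zero)
  next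
    case (step n)
    have n: "1 \<le> n" "n \<le> T" using step x by auto
    have K: "W F \<sigma> p T (Suc n) \<le> 1 + (\<integral>\<^sup>+ d. W F \<sigma> p T (next_avail \<sigma> T n d) \<partial>F)"
      by (rule K_inner[where \<sigma>=\<sigma> and T=T and p=p, OF Hs Hp n]) (use step.IH in auto)
    have D: "W F \<sigma> p T (Suc n) \<le> W F \<sigma> p T n"
      unfolding W_rec[OF n(2)] using K Hp[OF n] by (intro conv_ge) auto
    show ?case
    proof (intro allI impI)
      fix z y assume zy: "n \<le> z" "z \<le> y"
      show "W F \<sigma> p T y \<le> W F \<sigma> p T z"
      proof (cases "z = n")
        case True
        show ?thesis
        proof (cases "y = n")
          case False
          then have "W F \<sigma> p T y \<le> W F \<sigma> p T (Suc n)" using step.IH zy True by auto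
          then show ?thesis using D True by (meson order_trans)
        qed (use True in simp)
      next
        case False
        then show ?thesis using step.IH zy by auto
      qed
    qed
  qed
qed

lemma W_cmp:
  fixes \<sigma> p1 p2 :: "nat \<Rightarrow> real"
  assumes Hs: "\<And>i. 1 \<le> i \<Longrightarrow> i < T \<Longrightarrow> \<sigma> i < \<sigma> (Suc i)"
    and H1: "\<And>t. 1 \<le> t \<Longrightarrow> t \<le> T \<Longrightarrow> 0 \<le> p1 t \<and> p1 t \<le> 1"
    and H2: "\<And>t. 1 \<le> t \<Longrightarrow> t \<le> T \<Longrightarrow> 0 \<le> p2 t \<and> p2 t \<le> 1"
    and H12: "\<And>t. 1 \<le> t \<Longrightarrow> t \<le> T \<Longrightarrow> p1 t \<le> p2 t"
    and x: "1 \<le> x"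
  shows "\<forall>y. x \<le> y \<longrightarrow> W F \<sigma> p1 T y \<le> W F \<sigma> p2 T y"
proof (cases "T < x")
  case True
  then show ?thesis by (simp add: W_zero)
next
  case False
  then have "x \<le> Suc T" by simp
  then show ?thesis
  proof (induction x rule: inc_induct)
    case base
    then show ?case by (simp add: W_zero)
  next
    case (step n)
    have n: "1 \<le> n" "n \<le> T" using step x by auto
    have M2: "\<forall>z y. Suc n \<le> z \<longrightarrow> z \<le> y \<longrightarrow> W F \<sigma> p2 T y \<le> W F \<sigma> p2 T z"
      using W_mono[where \<sigma>=\<sigma> and T=T and p=p2 and F=F, OF Hs H2, of "Suc n"] by simp
    have K: "W F \<sigma> p2 T (Suc n) \<le> 1 + (\<integral>\<^sup>+ d. W F \<sigma> p2 T (next_avail \<sigma> T n d) \<partial>F)"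
      by (rule K_inner[where \<sigma>=\<sigma> and T=T and p=p2, OF Hs H2 n]) (use M2 in auto)
    have I: "(\<integral>\<^sup>+ d. W F \<sigma> p1 T (next_avail \<sigma> T n d) \<partial>F) \<le> (\<integral>\<^sup>+ d. W F \<sigma> p2 T (next_avail \<sigma> T n d) \<partial>F)"
    proof (rule nn_integral_mono)
      fix d
      show "W F \<sigma> p1 T (next_avail \<sigma> T n d) \<le> W F \<sigma> p2 T (next_avail \<sigma> T n d)"
        using step.IH na_gt[OF n(2), of \<sigma> d] by auto
    qed
    have Sn: "W F \<sigma> p1 T (Suc n) \<le> W F \<sigma> p2 T (Suc n)" using step.IH by auto
    have "W F \<sigma> p1 T n \<le> ennreal (p1 n) * (1 + (\<integral>\<^sup>+ d. W F \<sigma> p2 T (next_avail \<sigma> T n d) \<partial>F))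
           + ennreal (1 - p1 n) * W F \<sigma> p2 T (Suc n)"
      unfolding W_rec[OF n(2), of F \<sigma> p1] using I Sn
      by (intro add_mono mult_left_mono add_left_mono) auto
    also have "\<dots> \<le> W F \<sigma> p2 T n"
      unfolding W_rec[OF n(2), of F \<sigma> p2] using K H1[OF n] H2[OF n] H12[OF n]
      by (intro conv_mono) auto
    finally have "W F \<sigma> p1 T n \<le> W F \<sigma> p2 T n" .
    then show ?case using step.IH by (metis Suc_leI le_neq_implies_less)
  qed
qed

theorem lemma4:
  fixes F :: "ennreal measure" and \<sigma> p1 p2 :: "nat \<Rightarrow> real" and T :: nat
  assumes "prob_space F" and "sets F = sets borel"
    and "0 < \<sigma> 1" and "\<And>i. 1 \<le> i \<Longrightarrow> i < T \<Longrightarrow> \<sigma> i < \<sigma> (Suc i)"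
    and "\<And>t. 1 \<le> t \<Longrightarrow> t \<le> T \<Longrightarrow> 0 \<le> p1 t \<and> p1 t \<le> 1"
    and "\<And>t. 1 \<le> t \<Longrightarrow> t \<le> T \<Longrightarrow> 0 \<le> p2 t \<and> p2 t \<le> 1"
    and "\<And>t. 1 \<le> t \<Longrightarrow> t \<le> T \<Longrightarrow> p1 t \<le> p2 t"
  shows "reward F \<sigma> p1 T \<le> reward F \<sigma> p2 T"
  unfolding reward_W using W_cmp[where \<sigma>=\<sigma> and T=T and ?p1.0=p1 and ?p2.0=p2 and F=F, OF assms(4-7), of 1] by simp

end
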